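(* Let $m\in\mathbb{N}$, $p\in[1,\infty)$, let $\|\cdot\|$ be a norm on $\mathbb{R}^m$, let $\mathcal{Y}\subseteq\mathbb{R}^m$ be closed with the metric induced by $\|\cdot\|$, and let $\mathfrak{C}$ be a polyhedral cover of $\mathcal{Y}$ with mesh size $\eta(\mathfrak{C})$. (i) If $\mathfrak{C}$ is bounded and $\mathcal{G}$ is an interpolation function set for $\mathfrak{C}$, then for all $\mu,\nu\in\mathcal{P}_p(\mathcal{Y};\mathcal{G})$ with $\mu\overset{\mathcal{G}}{\sim}\nu$ we have $W_p(\mu,\nu)\le2\eta(\mathfrak{C})$. (ii) If $\mathfrak{C}$ is unbounded and $\mathcal{G}$ is a $p$-interpolation function set for $\mathfrak{C}$ with $\{\overline{g}_{\boldsymbol{u}}:\boldsymbol{u}\in D(\mathfrak{C})\}\subset\operatorname{span}_1(\mathcal{G})$ a $p$-radial function set, then for all $\mu,\nu\in\mathcal{P}_p(\mathcal{Y};\mathcal{G})$ with $\mu\overset{\mathcal{G}}{\sim}\nu$ we have $$W_p(\mu,\nu)\le2\eta(\mathfrak{C})+2\Big(\sum_{\boldsymbol{u}\in D(\mathfrak{C})}\int_{\mathcal{Y}}\overline{g}_{\boldsymbol{u}}\,\mathrm{d}\mu\Big)^{1/p}.$$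
   Context: $\mathcal{P}_p(\mathcal{Y})$: Borel probability measures with finite $p$-th moment; $W_p$: Wasserstein distance of order $p$. For a collection $\mathcal{G}$ of real Borel functions on $\mathcal{Y}$, $\mathcal{P}_p(\mathcal{Y};\mathcal{G}):=\{\mu\in\mathcal{P}_p(\mathcal{Y}):\mathcal{G}\subseteq\mathcal{L}^p(\mathcal{Y},\mu)\}$, and $\mu\overset{\mathcal{G}}{\sim}\nu$ means $\int g\,\mathrm{d}\mu=\int g\,\mathrm{d}\nu$ for all $g\in\mathcal{G}$. $\operatorname{span}_1(\mathcal{G})$ is the set of $y_0+\sum_{j=1}^ky_jg_j$ ($k\in\mathbb{N}_0$, $y_j\in\mathbb{R}$, $g_j\in\mathcal{G}$). Convex geometry: a convex $C'\subseteq C$ is a face of a convex set $C$ if $\lambda x_1+(1-\lambda)x_2\in C'$ with $0<\lambda<1$, $x_1,x_2\in C$ implies $x_1,x_2\in C'$; $x$ is an extreme point if $\{x\}$ is a face; $z$ is an extreme direction of $C$ if $\{x+\lambda z:\lambda\ge0\}$ is a face of $C$ for some $x\in C$. A polyhedron is a finite intersection of closed half-spaces. A polyhedral cover of $\mathcal{Y}$ is a finite collection $\mathfrak{C}$ of polyhedra in $\mathbb{R}^m$, each with at least one extreme point, with $\bigcup_{C\in\mathfrak{C}}C\supseteq\mathcal{Y}$, such that if $C_1,C_2\in\mathfrak{C}$ and $C_1\cap C_2\ne\emptyset$ then $C_1\cap C_2$ is a face of both. It is bounded if all members are bounded. For a polyhedron $C$ with an extreme point, $V(C)$ is its (finite)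 set of extreme points and $D(C)$ its (finite, possibly empty) set of extreme directions. $\mathfrak{F}(\mathfrak{C})$ is the set of non-empty faces of members of $\mathfrak{C}$, $V(\mathfrak{C}):=\bigcup_{C\in\mathfrak{C}}V(C)$, $D(\mathfrak{C}):=\bigcup_{C\in\mathfrak{C}}D(C)$, and $\eta(\mathfrak{C}):=\max_{C\in\mathfrak{C}}\max_{\boldsymbol{v},\boldsymbol{v}'\in V(C)}\|\boldsymbol{v}-\boldsymbol{v}'\|$. A vertex interpolation function set for $\mathfrak{C}$ is a family $\{g_{\boldsymbol{v}}:\bigcup_{C\in\mathfrak{C}}C\to\mathbb{R}\}_{\boldsymbol{v}\in V(\mathfrak{C})}$ with: (VIF1) $g_{\boldsymbol{v}}\ge0$; (VIF2) $g_{\boldsymbol{v}}(\boldsymbol{v}')=\mathbf{1}_{\{\boldsymbol{v}=\boldsymbol{v}'\}}$ for $\boldsymbol{v},\boldsymbol{v}'\in V(\mathfrak{C})$; (VIF3) $\sum_{\boldsymbol{v}\in V(F)}g_{\boldsymbol{v}}(\boldsymbol{x})=1$ for all $F\in\mathfrak{F}(\mathfrak{C})$, $\boldsymbol{x}\in F$; (VIF4) $g_{\boldsymbol{v}}(\boldsymbol{x})=0$ for all $F\in\mathfrak{F}(\mathfrak{C})$, $\boldsymbol{x}\in F$, $\boldsymbol{v}\in V(\mathfrak{C})\setminus V(F)$. When $\mathfrak{C}$ is unbounded, a $p$-radial function set is a family $\{\overline{g}_{\boldsymbol{u}}:\bigcup_{C\in\mathfrak{C}}C\to\mathbb{R}\}_{\boldsymbol{u}\in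 D(\mathfrak{C})}$ with (RF1) $\overline{g}_{\boldsymbol{u}}\ge0$ and (RF2) for every unbounded $F\in\mathfrak{F}(\mathfrak{C})$ and $\boldsymbol{x}\in F$: $(\min_{\boldsymbol{y}\in\operatorname{conv}(V(F))}\|\boldsymbol{x}-\boldsymbol{y}\|)^p\le\sum_{\boldsymbol{u}\in D(F)}\overline{g}_{\boldsymbol{u}}(\boldsymbol{x})$. For unbounded $\mathfrak{C}$, a set $\mathcal{G}$ of real functions on $\bigcup_{C\in\mathfrak{C}}C$ is a $p$-interpolation function set if $\operatorname{span}_1(\mathcal{G})$ contains a vertex interpolation function set and a $p$-radial function set; for bounded $\mathfrak{C}$, $\mathcal{G}$ is an interpolation function set if $\operatorname{span}_1(\mathcal{G})$ contains a vertex interpolation function set. *)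

theory Defs
  imports "HOL-Analysis.Analysis" "HOL-Probability.Probability"
begin

definition is_norm :: "('a::real_vector \<Rightarrow> real) \<Rightarrow> bool" where
  "is_norm N \<longleftrightarrow> (\<forall>x. N x \<ge> 0) \<and> (\<forall>x. N x = 0 \<longleftrightarrow> x = 0) \<and>
     (\<forall>c x. N (c *\<^sub>R x) = \<bar>c\<bar> * N x) \<and> (\<forall>x y. N (x + y) \<le> N x + N y)"

definition borel_prob_on :: "'a::topological_space set \<Rightarrow> 'a measure \<Rightarrow> bool" where
  "borel_prob_on Y \<mu> \<longleftrightarrow> prob_space \<mu> \<and> sets \<mu> = sets (restrict_space borel Y)"

definition Pp :: "real \<Rightarrow> ('a::real_normed_vector \<Rightarrow> real) \<Rightarrow> 'a set \<Rightarrow> 'a measure set" where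
  "Pp p N Y = {\<mu>. borel_prob_on Y \<mu> \<and> (\<exists>y0\<in>Y. integrable \<mu> (\<lambda>x. N (x - y0) powr p))}"

definition in_Lp :: "real \<Rightarrow> 'a measure \<Rightarrow> ('a \<Rightarrow> real) \<Rightarrow> bool" where
  "in_Lp p \<mu> g \<longleftrightarrow> g \<in> borel_measurable \<mu> \<and> integrable \<mu> (\<lambda>x. \<bar>g x\<bar> powr p)"

definition PpG :: "real \<Rightarrow> ('a::real_normed_vector \<Rightarrow> real) \<Rightarrow> 'a set \<Rightarrow> ('a \<Rightarrow> real) set \<Rightarrow> 'a measure set" where
  "PpG p N Y G = {\<mu> \<in> Pp p N Y. \<forall>g\<in>G. in_Lp p \<mu> g}"

definition G_equiv :: "('a \<Rightarrow> real) set \<Rightarrow> 'a measure \<Rightarrow> 'a measure \<Rightarrow> bool" where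
  "G_equiv G \<mu> \<nu> \<longleftrightarrow> (\<forall>g\<in>G. (\<integral>x. g x \<partial>\<mu>) = (\<integral>x. g x \<partial>\<nu>))"

definition couplings :: "'a measure \<Rightarrow> 'a measure \<Rightarrow> ('a \<times> 'a) measure set" where
  "couplings \<mu> \<nu> = {\<gamma>. prob_space \<gamma> \<and> sets \<gamma> = sets (\<mu> \<Otimes>\<^sub>M \<nu>) \<and>
      distr \<gamma> \<mu> fst = \<mu> \<and> distr \<gamma> \<nu> snd = \<nu>}"

text \<open>Wasserstein distance of order p w.r.t. the metric (x,y) \<mapsto> N(x - y).
  (For measures with finite p-th moment the infimum is finite.)\<close>
definition Wasserstein :: "real \<Rightarrow> ('a::real_vector \<Rightarrow> real) \<Rightarrow> 'a measure \<Rightarrow> 'a measure \<Rightarrow> real" where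
  "Wasserstein p N \<mu> \<nu> =
     enn2real (INF \<gamma>\<in>couplings \<mu> \<nu>. \<integral>\<^sup>+z. ennreal (N (fst z - snd z) powr p) \<partial>\<gamma>) powr (1 / p)"

definition vertices :: "'a::real_vector set \<Rightarrow> 'a set" where
  "vertices C = {v. v extreme_point_of C}"

text \<open>Extreme directions, normalized to Euclidean norm 1 (one representative per ray direction).\<close>
definition ext_dirs :: "'a::real_normed_vector set \<Rightarrow> 'a set" where
  "ext_dirs C = {z. norm z = 1 \<and> (\<exists>x\<in>C. {x + l *\<^sub>R z | l. l \<ge> 0} face_of C)}"

definition polyhedral_cover :: "'a::euclidean_space set set \<Rightarrow> 'a set \<Rightarrow> bool" where
  "polyhedral_cover CC Y \<longleftrightarrow> finite CC \<and> (\<forall>C\<in>CC. polyhedron C \<and> vertices C \<noteq> {}) \<and>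
     Y \<subseteq> \<Union>CC \<and>
     (\<forall>C1\<in>CC. \<forall>C2\<in>CC. C1 \<inter> C2 \<noteq> {} \<longrightarrow> (C1 \<inter> C2) face_of C1 \<and> (C1 \<inter> C2) face_of C2)"

definition cover_faces :: "'a::real_vector set set \<Rightarrow> 'a set set" where
  "cover_faces CC = {F. F \<noteq> {} \<and> (\<exists>C\<in>CC. F face_of C)}"

definition cover_vertices :: "'a::real_vector set set \<Rightarrow> 'a set" where
  "cover_vertices CC = (\<Union>C\<in>CC. vertices C)"

definition cover_dirs :: "'a::real_normed_vector set set \<Rightarrow> 'a set" where
  "cover_dirs CC = (\<Union>C\<in>CC. ext_dirs C)"

definition mesh :: "('a::real_vector \<Rightarrow> real) \<Rightarrow> 'a set set \<Rightarrow> real" where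
  "mesh N CC = Max ((\<lambda>C. Max {N (v - v') | v v'. v \<in> vertices C \<and> v' \<in> vertices C}) ` CC)"

definition vertex_interp :: "'a::real_vector set set \<Rightarrow> ('a \<Rightarrow> 'a \<Rightarrow> real) \<Rightarrow> bool" where
  "vertex_interp CC g \<longleftrightarrow>
     (\<forall>v\<in>cover_vertices CC. \<forall>x\<in>\<Union>CC. g v x \<ge> 0) \<and>
     (\<forall>v\<in>cover_vertices CC. \<forall>v'\<in>cover_vertices CC. g v v' = (if v = v' then 1 else 0)) \<and>
     (\<forall>F\<in>cover_faces CC. \<forall>x\<in>F. (\<Sum>v\<in>vertices F. g v x) = 1) \<and>
     (\<forall>F\<in>cover_faces CC. \<forall>x\<in>F. \<forall>v\<in>cover_vertices CC - vertices F. g v x = 0)"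

definition radial_fun_set :: "real \<Rightarrow> ('a::real_normed_vector \<Rightarrow> real) \<Rightarrow> 'a set set \<Rightarrow> ('a \<Rightarrow> 'a \<Rightarrow> real) \<Rightarrow> bool" where
  "radial_fun_set p N CC gb \<longleftrightarrow>
     (\<forall>u\<in>cover_dirs CC. \<forall>x\<in>\<Union>CC. gb u x \<ge> 0) \<and>
     (\<forall>F\<in>cover_faces CC. \<not> bounded F \<longrightarrow>
        (\<forall>x\<in>F. (INF y\<in>convex hull (vertices F). N (x - y)) powr p \<le> (\<Sum>u\<in>ext_dirs F. gb u x)))"

definition span1 :: "('a \<Rightarrow> real) set \<Rightarrow> ('a \<Rightarrow> real) set" where
  "span1 G = {f. \<exists>c0 S c. finite S \<and> S \<subseteq> G \<and> f = (\<lambda>x. c0 + (\<Sum>h\<in>S. c h * h x))}"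

definition interp_fun_set :: "'a::real_vector set set \<Rightarrow> ('a \<Rightarrow> real) set \<Rightarrow> bool" where
  "interp_fun_set CC G \<longleftrightarrow> (\<exists>g. vertex_interp CC g \<and> (\<forall>v\<in>cover_vertices CC. g v \<in> span1 G))"

definition p_interp_fun_set :: "real \<Rightarrow> ('a::real_normed_vector \<Rightarrow> real) \<Rightarrow> 'a set set \<Rightarrow> ('a \<Rightarrow> real) set \<Rightarrow> bool" where
  "p_interp_fun_set p N CC G \<longleftrightarrow> interp_fun_set CC G \<and>
     (\<exists>gb. radial_fun_set p N CC gb \<and> (\<forall>u\<in>cover_dirs CC. gb u \<in> span1 G))"

end

theory Submission imports Defs begin

lemma powr_ge1:
  fixes x e :: real assumes "0 < x" "x \<le> 1" "e \<le> 0" shows "x powr e \<ge> 1"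
proof -
  have "x powr (- e) \<le> 1 powr (- e)" using assms by (intro powr_mono2) auto
  hence "x powr (- e) \<le> 1" by simp
  moreover have "x powr (- e) > 0" using assms by simp
  ultimately have "inverse (x powr (- e)) \<ge> 1" by (simp add: one_le_inverse)
  thus ?thesis by (simp add: powr_minus[symmetric])
qed

lemma powr_split:
  fixes a b l p :: real
  assumes "a \<ge> 0" "b \<ge> 0" "0 < l" "l < 1" "p \<ge> 1"
  shows "(a + b) powr p \<le> l powr (1 - p) * a powr p + (1 - l) powr (1 - p) * b powr p"
proof -
  have l1: "(1 - l) powr (1 - p) \<ge> 1" using assms by (intro powr_ge1) auto
  have l2: "l powr (1 - p) \<ge> 1" using assms by (intro powr_ge1) auto
  show ?thesis
  proof (cases "a = 0 \<or> b = 0")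
    case True
    then show ?thesis
    proof
      assume "a = 0" then show ?thesis using l1 assms
        by (simp add: mult_le_cancel_right1)
    next
      assume "b = 0" then show ?thesis using l2 assms
        by (simp add: mult_le_cancel_right1)
    qed
  next
    case False
    hence ab: "a > 0" "b > 0" using assms by auto
    have c: "convex_on {0<..} (\<lambda>x::real. x powr p)" by (rule powr_convex[OF assms(5)])
    have "((1 - l) *\<^sub>R (b / (1 - l)) + l *\<^sub>R (a / l)) powr p \<le> (1 - l) * (b / (1 - l)) powr p + l * (a / l) powr p"
      using convex_onD[OF c, of l "b / (1 - l)" "a / l"] assms ab by auto
    moreover have "(1 - l) *\<^sub>R (b / (1 - l)) + l *\<^sub>R (a / l) = a + b" using assms by simp
    moreover have "l * (a / l) powr p = l powr (1 - p) * a powr p"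
      using assms ab by (simp add: powr_divide powr_diff field_simps powr_one)
    moreover have "(1 - l) * (b / (1 - l)) powr p = (1 - l) powr (1 - p) * b powr p"
      using assms ab by (simp add: powr_divide powr_diff field_simps powr_one)
    ultimately show ?thesis by (metis add.commute)
  qed
qed

lemma final_alg:
  fixes e s p :: real
  assumes "e > 0" "s > 0" "p \<ge> 1"
  shows "(e / (e + s)) powr (1 - p) * (2 * e) powr p + (1 - e / (e + s)) powr (1 - p) * 2 powr (p - 1) * (2 * s powr p) = (2 * e + 2 * s) powr p"
proof -
  have q: "1 - e / (e + s) = s / (e + s)" using assms by (simp add: field_simps)
  have pe: "e powr p > 0" "(e + s) powr p > 0" "s powr p > 0" "e + s > 0" using assms by auto
  have A: "(e / (e + s)) powr (1 - p) * (2 * e) powr p = 2 powr p * e * (e + s) powr (p - 1)"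
    using assms pe by (simp add: powr_divide powr_mult powr_diff powr_one divide_simps)
  have B: "(s / (e + s)) powr (1 - p) * 2 powr (p - 1) * (2 * s powr p) = 2 powr p * s * (e + s) powr (p - 1)"
    using assms pe by (simp add: powr_divide powr_mult powr_diff powr_one divide_simps)
  have C: "(2 * e + 2 * s) powr p = 2 powr p * (e + s) * (e + s) powr (p - 1)"
  proof -
    have "(2 * e + 2 * s) powr p = (2 * (e + s)) powr p" by (simp add: algebra_simps)
    also have "\<dots> = 2 powr p * (e + s) powr p" by (meson less_imp_le pe(4) powr_mult zero_le_numeral)
    also have "(e + s) powr p = (e + s) * (e + s) powr (p - 1)" using pe by (simp add: powr_diff powr_one)
    finally show ?thesis by simp
  qed
  show ?thesis unfolding q A B C by (simp add: algebra_simps)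
qed

lemma one_minus_half: "(1 - 1 / 2 :: real) = 1 / 2" by simp

lemma norm_sym:
  assumes N: "is_norm N" shows "N (a - b) = N (b - a)"
proof -
  have "N ((-1) *\<^sub>R (a - b)) = \<bar>-1\<bar> * N (a - b)" using N unfolding is_norm_def by blast
  thus ?thesis by simp
qed

lemma norm_tri:
  assumes N: "is_norm N" shows "N (a - c) \<le> N (a - b) + N (b - c)"
proof -
  have "N ((a - b) + (b - c)) \<le> N (a - b) + N (b - c)" using N unfolding is_norm_def by blast
  thus ?thesis by simp
qed

lemma norm_nn: assumes N: "is_norm N" shows "N x \<ge> 0" using N unfolding is_norm_def by blast

lemma core:
  fixes N :: "'a::euclidean_space \<Rightarrow> real" and \<mu> \<nu> :: "'a measure"
    and g :: "'a \<Rightarrow> 'a \<Rightarrow> real" and R :: "'a \<Rightarrow> real"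
  assumes N: "is_norm N" and p: "p \<ge> 1"
  and mu: "borel_prob_on Y \<mu>" and nu: "borel_prob_on Y \<nu>"
  and V: "finite V"
  and gmu: "\<And>v. v \<in> V \<Longrightarrow> integrable \<mu> (g v)"
  and gnu: "\<And>v. v \<in> V \<Longrightarrow> integrable \<nu> (g v)"
  and geq: "\<And>v. v \<in> V \<Longrightarrow> (\<integral>x. g v x \<partial>\<mu>) = (\<integral>x. g v x \<partial>\<nu>)"
  and gnn: "\<And>v x. v \<in> V \<Longrightarrow> x \<in> Y \<Longrightarrow> g v x \<ge> 0"
  and gsum: "\<And>x. x \<in> Y \<Longrightarrow> (\<Sum>v\<in>V. g v x) = 1"
  and Rmu: "integrable \<mu> R" and Rnu: "integrable \<nu> R"
  and Rnn: "\<And>x. x \<in> Y \<Longrightarrow> R x \<ge> 0"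
  and RTmu: "(\<integral>x. R x \<partial>\<mu>) = T" and RTnu: "(\<integral>x. R x \<partial>\<nu>) = T"
  and e: "e > 0" and s: "s > 0" and sT: "T \<le> s powr p"
  and bnd: "\<And>x v. x \<in> Y \<Longrightarrow> v \<in> V \<Longrightarrow> g v x \<noteq> 0 \<Longrightarrow> N (x - v) \<le> e + R x powr (1 / p)"
  shows "Wasserstein p N \<mu> \<nu> \<le> 2 * e + 2 * s"
proof -
  have pm: "prob_space \<mu>" and smu: "sets \<mu> = sets (restrict_space borel Y)"
    using mu unfolding borel_prob_on_def by auto
  have pn: "prob_space \<nu>" and snu: "sets \<nu> = sets (restrict_space borel Y)"
    using nu unfolding borel_prob_on_def by auto
  have spmu: "space \<mu> = Y" using sets_eq_imp_space_eq[OF smu] by (simp add: space_restrict_space)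
  have spnu: "space \<nu> = Y" using sets_eq_imp_space_eq[OF snu] by (simp add: space_restrict_space)
  interpret P: pair_prob_space \<mu> \<nu>
    using pm pn by (simp add: pair_prob_space_def pair_sigma_finite_def prob_space_imp_sigma_finite)
  have gmm: "g v \<in> borel_measurable \<mu>" if "v \<in> V" for v using gmu[OF that] by auto
  have gmn: "g v \<in> borel_measurable \<nu>" if "v \<in> V" for v using gnu[OF that] by auto
  define m where "m v = (\<integral>x. g v x \<partial>\<mu>)" for v
  have mnn: "m v \<ge> 0" if "v \<in> V" for v
    unfolding m_def using gnn[OF that] spmu by (intro integral_nonneg_AE) auto
  define f where "f z = (\<Sum>v\<in>V. g v (fst z) * g v (snd z) / m v)" for z
  have fmeas: "f \<in> borel_measurable (\<mu> \<Otimes>\<^sub>M \<nu>)"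
    unfolding f_def
    by (intro borel_measurable_sum borel_measurable_times borel_measurable_divide borel_measurable_const
        measurable_compose[OF measurable_fst gmm] measurable_compose[OF measurable_snd gmn])
  have spP: "space (\<mu> \<Otimes>\<^sub>M \<nu>) = Y \<times> Y" by (simp add: space_pair_measure spmu spnu)
  have fnn: "f z \<ge> 0" if "z \<in> Y \<times> Y" for z
    unfolding f_def using that gnn mnn by (auto intro!: sum_nonneg divide_nonneg_nonneg)
  define \<gamma> where "\<gamma> = density (\<mu> \<Otimes>\<^sub>M \<nu>) (\<lambda>z. ennreal (f z))"
  have sets\<gamma>: "sets \<gamma> = sets (\<mu> \<Otimes>\<^sub>M \<nu>)" unfolding \<gamma>_def by simp
  have sp\<gamma>: "space \<gamma> = Y \<times> Y" unfolding \<gamma>_def by (simp add: spP)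
  have inner1: "(\<integral>\<^sup>+y. ennreal (f (x, y)) \<partial>\<nu>) = ennreal (\<Sum>v\<in>V. g v x * m v / m v)" if x: "x \<in> Y" for x
  proof -
    have eq: "f (x, y) = (\<Sum>v\<in>V. (g v x / m v) * g v y)" for y unfolding f_def by simp
    have int: "integrable \<nu> (\<lambda>y. f (x, y))" unfolding eq
      using gnu by auto
    have "(\<integral>\<^sup>+y. ennreal (f (x, y)) \<partial>\<nu>) = ennreal (\<integral>y. f (x, y) \<partial>\<nu>)"
      using int fnn x spnu by (intro nn_integral_eq_integral) auto
    also have "(\<integral>y. f (x, y) \<partial>\<nu>) = (\<Sum>v\<in>V. g v x * m v / m v)"
    proof -
      have "(\<integral>y. (\<Sum>v\<in>V. (g v x / m v) * g v y) \<partial>\<nu>) = (\<Sum>v\<in>V. \<integral>y. (g v x / m v) * g v y \<partial>\<nu>)"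
        using gnu by simp
      also have "\<dots> = (\<Sum>v\<in>V. g v x * m v / m v)"
        by (intro sum.cong refl) (simp add: m_def geq)
      finally show ?thesis unfolding eq .
    qed
    finally show ?thesis .
  qed
  have inner2: "(\<integral>\<^sup>+x. ennreal (f (x, y)) \<partial>\<mu>) = ennreal (\<Sum>v\<in>V. g v y * m v / m v)" if y: "y \<in> Y" for y
  proof -
    have eq: "f (x, y) = (\<Sum>v\<in>V. (g v y / m v) * g v x)" for x unfolding f_def by (simp add: mult.commute)
    have int: "integrable \<mu> (\<lambda>x. f (x, y))" unfolding eq
      using gmu by auto
    have "(\<integral>\<^sup>+x. ennreal (f (x, y)) \<partial>\<mu>) = ennreal (\<integral>x. f (x, y) \<partial>\<mu>)"
      using int fnn y spmu by (intro nn_integral_eq_integral) auto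
    also have "(\<integral>x. f (x, y) \<partial>\<mu>) = (\<Sum>v\<in>V. g v y * m v / m v)"
    proof -
      have "(\<integral>x. (\<Sum>v\<in>V. (g v y / m v) * g v x) \<partial>\<mu>) = (\<Sum>v\<in>V. \<integral>x. (g v y / m v) * g v x \<partial>\<mu>)"
        using gmu by simp
      also have "\<dots> = (\<Sum>v\<in>V. g v y * m v / m v)"
        by (intro sum.cong refl) (simp add: m_def)
      finally show ?thesis unfolding eq .
    qed
    finally show ?thesis .
  qed
  have AE1: "AE x in \<mu>. (\<Sum>v\<in>V. g v x * m v / m v) = 1"
  proof -
    have "AE x in \<mu>. \<forall>v\<in>V. m v = 0 \<longrightarrow> g v x = 0"
    proof (rule AE_finite_allI[OF V])
      fix v assume v: "v \<in> V"
      show "AE x in \<mu>. m v = 0 \<longrightarrow> g v x = 0"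
      proof (cases "m v = 0")
        case True
        have "AE x in \<mu>. g v x = 0"
          using integral_nonneg_eq_0_iff_AE[OF gmu[OF v]] True gnn[OF v] spmu unfolding m_def by auto
        thus ?thesis by auto
      qed auto
    qed
    thus ?thesis
    proof (rule AE_mp[OF _ AE_I2], intro impI)
      fix x assume x: "x \<in> space \<mu>" and h: "\<forall>v\<in>V. m v = 0 \<longrightarrow> g v x = 0"
      have "(\<Sum>v\<in>V. g v x * m v / m v) = (\<Sum>v\<in>V. g v x)"
        using h by (intro sum.cong) auto
      thus "(\<Sum>v\<in>V. g v x * m v / m v) = 1" using gsum x spmu by auto
    qed
  qed
  have AE2: "AE x in \<nu>. (\<Sum>v\<in>V. g v x * m v / m v) = 1"
  proof -
    have "AE x in \<nu>. \<forall>v\<in>V. m v = 0 \<longrightarrow> g v x = 0"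
    proof (rule AE_finite_allI[OF V])
      fix v assume v: "v \<in> V"
      show "AE x in \<nu>. m v = 0 \<longrightarrow> g v x = 0"
      proof (cases "m v = 0")
        case True
        have "AE x in \<nu>. g v x = 0"
          using integral_nonneg_eq_0_iff_AE[OF gnu[OF v]] True gnn[OF v] spnu geq[OF v] unfolding m_def by auto
        thus ?thesis by auto
      qed auto
    qed
    thus ?thesis
    proof (rule AE_mp[OF _ AE_I2], intro impI)
      fix x assume x: "x \<in> space \<nu>" and h: "\<forall>v\<in>V. m v = 0 \<longrightarrow> g v x = 0"
      have "(\<Sum>v\<in>V. g v x * m v / m v) = (\<Sum>v\<in>V. g v x)"
        using h by (intro sum.cong) auto
      thus "(\<Sum>v\<in>V. g v x * m v / m v) = 1" using gsum x spnu by auto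
    qed
  qed
  have marg1: "emeasure \<gamma> (A \<times> Y) = emeasure \<mu> A" if A: "A \<in> sets \<mu>" for A
  proof -
    have AY: "A \<times> Y \<in> sets (\<mu> \<Otimes>\<^sub>M \<nu>)"
      using A sets.top[of \<nu>] spnu by (intro pair_measureI) auto
    have "emeasure \<gamma> (A \<times> Y) = (\<integral>\<^sup>+z. ennreal (f z) * indicator (A \<times> Y) z \<partial>(\<mu> \<Otimes>\<^sub>M \<nu>))"
      unfolding \<gamma>_def using fmeas AY by (intro emeasure_density) auto
    also have "\<dots> = (\<integral>\<^sup>+x. \<integral>\<^sup>+y. ennreal (f (x, y)) * indicator (A \<times> Y) (x, y) \<partial>\<nu> \<partial>\<mu>)"
      using fmeas AY by (intro P.M2.nn_integral_fst[symmetric]) auto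
    also have "\<dots> = (\<integral>\<^sup>+x. indicator A x \<partial>\<mu>)"
    proof (rule nn_integral_cong_AE)
      show "AE x in \<mu>. (\<integral>\<^sup>+y. ennreal (f (x, y)) * indicator (A \<times> Y) (x, y) \<partial>\<nu>) = indicator A x"
        using AE1
      proof (rule AE_mp[OF _ AE_I2], intro impI)
        fix x assume x: "x \<in> space \<mu>" and h: "(\<Sum>v\<in>V. g v x * m v / m v) = 1"
        have "(\<integral>\<^sup>+y. ennreal (f (x, y)) * indicator (A \<times> Y) (x, y) \<partial>\<nu>) = (\<integral>\<^sup>+y. ennreal (f (x, y)) * indicator A x \<partial>\<nu>)"
          using spnu by (intro nn_integral_cong) (auto simp: indicator_def)
        also have "\<dots> = (\<integral>\<^sup>+y. ennreal (f (x, y)) \<partial>\<nu>) * indicator A x"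
          using fmeas x spmu by (intro nn_integral_multc) auto
        also have "\<dots> = indicator A x" using inner1[of x] x spmu h by simp
        finally show "(\<integral>\<^sup>+y. ennreal (f (x, y)) * indicator (A \<times> Y) (x, y) \<partial>\<nu>) = indicator A x" .
      qed
    qed
    also have "\<dots> = emeasure \<mu> A" using A by simp
    finally show ?thesis .
  qed
  have marg2: "emeasure \<gamma> (Y \<times> B) = emeasure \<nu> B" if B: "B \<in> sets \<nu>" for B
  proof -
    have YB: "Y \<times> B \<in> sets (\<mu> \<Otimes>\<^sub>M \<nu>)"
      using B sets.top[of \<mu>] spmu by (intro pair_measureI) auto
    have "emeasure \<gamma> (Y \<times> B) = (\<integral>\<^sup>+z. ennreal (f z) * indicator (Y \<times> B) z \<partial>(\<mu> \<Otimes>\<^sub>M \<nu>))"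
      unfolding \<gamma>_def using fmeas YB by (intro emeasure_density) auto
    also have "\<dots> = (\<integral>\<^sup>+y. \<integral>\<^sup>+x. ennreal (f (x, y)) * indicator (Y \<times> B) (x, y) \<partial>\<mu> \<partial>\<nu>)"
      using fmeas YB by (intro P.nn_integral_snd[symmetric]) auto
    also have "\<dots> = (\<integral>\<^sup>+y. indicator B y \<partial>\<nu>)"
    proof (rule nn_integral_cong_AE)
      show "AE y in \<nu>. (\<integral>\<^sup>+x. ennreal (f (x, y)) * indicator (Y \<times> B) (x, y) \<partial>\<mu>) = indicator B y"
        using AE2
      proof (rule AE_mp[OF _ AE_I2], intro impI)
        fix y assume y: "y \<in> space \<nu>" and h: "(\<Sum>v\<in>V. g v y * m v / m v) = 1"
        have "(\<integral>\<^sup>+x. ennreal (f (x, y)) * indicator (Y \<times> B) (x, y) \<partial>\<mu>) = (\<integral>\<^sup>+x. ennreal (f (x, y)) * indicator B y \<partial>\<mu>)"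
          using spmu by (intro nn_integral_cong) (auto simp: indicator_def)
        also have "\<dots> = (\<integral>\<^sup>+x. ennreal (f (x, y)) \<partial>\<mu>) * indicator B y"
          using fmeas y spnu by (intro nn_integral_multc) auto
        also have "\<dots> = indicator B y" using inner2[of y] y spnu h by simp
        finally show "(\<integral>\<^sup>+x. ennreal (f (x, y)) * indicator (Y \<times> B) (x, y) \<partial>\<mu>) = indicator B y" .
      qed
    qed
    also have "\<dots> = emeasure \<nu> B" using B by simp
    finally show ?thesis .
  qed
  have fstm: "fst \<in> measurable \<gamma> \<mu>" using measurable_cong_sets[OF sets\<gamma> refl] measurable_fst by blast
  have sndm: "snd \<in> measurable \<gamma> \<nu>" using measurable_cong_sets[OF sets\<gamma> refl] measurable_snd by blast
  have d1: "distr \<gamma> \<mu> fst = \<mu>"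
  proof (rule measure_eqI)
    fix A assume A: "A \<in> sets (distr \<gamma> \<mu> fst)"
    hence A': "A \<in> sets \<mu>" by simp
    have "fst -` A \<inter> space \<gamma> = A \<times> Y"
      using sets.sets_into_space[OF A'] spmu sp\<gamma> by auto
    thus "emeasure (distr \<gamma> \<mu> fst) A = emeasure \<mu> A"
      using emeasure_distr[OF fstm A'] marg1[OF A'] by simp
  qed simp
  have d2: "distr \<gamma> \<nu> snd = \<nu>"
  proof (rule measure_eqI)
    fix B assume B: "B \<in> sets (distr \<gamma> \<nu> snd)"
    hence B': "B \<in> sets \<nu>" by simp
    have "snd -` B \<inter> space \<gamma> = Y \<times> B"
      using sets.sets_into_space[OF B'] spnu sp\<gamma> by auto
    thus "emeasure (distr \<gamma> \<nu> snd) B = emeasure \<nu> B"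
      using emeasure_distr[OF sndm B'] marg2[OF B'] by simp
  qed simp
  have pg: "prob_space \<gamma>"
  proof (rule prob_spaceI)
    have "emeasure \<gamma> (space \<gamma>) = emeasure \<mu> Y" using marg1[of Y] sp\<gamma> sets.top[of \<mu>] spmu by simp
    thus "emeasure \<gamma> (space \<gamma>) = 1" using prob_space.emeasure_space_1[OF pm] spmu by simp
  qed
  have coup: "\<gamma> \<in> couplings \<mu> \<nu>" unfolding couplings_def using pg sets\<gamma> d1 d2 by auto
  define D where "D x = R x powr (1 / p)" for x
  define l where "l = e / (e + s)"
  define K0 where "K0 = l powr (1 - p) * (2 * e) powr p"
  define K1 where "K1 = (1 - l) powr (1 - p) * 2 powr (p - 1)"
  have l0: "0 < l" "l < 1" unfolding l_def using e s by auto
  have K0nn: "K0 \<ge> 0" and K1nn: "K1 \<ge> 0" unfolding K0_def K1_def by auto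
  have DR: "D x powr p = R x" if "x \<in> Y" for x
    unfolding D_def using Rnn[OF that] p by (simp add: powr_powr powr_one)
  have half: "(1 / 2 :: real) powr (1 - p) = 2 powr (p - 1)"
    by (simp add: powr_divide powr_minus_divide[symmetric])
  have pw: "N (x - y) powr p \<le> K0 + K1 * R x + K1 * R y"
    if x: "x \<in> Y" and y: "y \<in> Y" and fp: "f (x, y) > 0" for x y
  proof -
    obtain v where v: "v \<in> V" and nz: "g v x * g v y / m v \<noteq> 0"
    proof (rule ccontr)
      assume "\<not> thesis"
      with that have "\<forall>v\<in>V. g v x * g v y / m v = 0" by blast
      hence "f (x, y) = 0" unfolding f_def by (intro sum.neutral) simp
      with fp show False by simp
    qed
    hence gx: "g v x \<noteq> 0" and gy: "g v y \<noteq> 0" by auto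
    have "N (x - y) \<le> N (x - v) + N (v - y)" by (rule norm_tri[OF N])
    also have "N (v - y) = N (y - v)" by (rule norm_sym[OF N])
    finally have "N (x - y) \<le> 2 * e + (D x + D y)"
      using bnd[OF x v gx] bnd[OF y v gy] unfolding D_def by linarith
    hence "N (x - y) powr p \<le> (2 * e + (D x + D y)) powr p"
      using p norm_nn[OF N] by (intro powr_mono2) auto
    also have "\<dots> \<le> l powr (1 - p) * (2 * e) powr p + (1 - l) powr (1 - p) * (D x + D y) powr p"
      using e l0 p unfolding D_def by (intro powr_split) auto
    also have "(D x + D y) powr p \<le> (1 / 2) powr (1 - p) * D x powr p + (1 - 1 / 2) powr (1 - p) * D y powr p"
      using p unfolding D_def by (intro powr_split) auto
    hence "(D x + D y) powr p \<le> (1 / 2) powr (1 - p) * R x + (1 / 2) powr (1 - p) * R y"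
      unfolding DR[OF x] DR[OF y] by (simp only: one_minus_half)
    hence "(D x + D y) powr p \<le> 2 powr (p - 1) * (R x + R y)"
      unfolding half by (simp only: distrib_left)
    hence "(1 - l) powr (1 - p) * (D x + D y) powr p \<le> (1 - l) powr (1 - p) * (2 powr (p - 1) * (R x + R y))"
      by (intro mult_left_mono) auto
    also have "(1 - l) powr (1 - p) * (2 powr (p - 1) * (R x + R y)) = K1 * R x + K1 * R y"
      unfolding K1_def by (simp only: distrib_left mult.assoc)
    finally show ?thesis unfolding K0_def by linarith
  qed
  have fmeas': "(\<lambda>z. ennreal (f z)) \<in> borel_measurable (\<mu> \<Otimes>\<^sub>M \<nu>)" using fmeas by measurable
  have Rmm: "R \<in> borel_measurable \<mu>" using Rmu by auto
  have Rmn: "R \<in> borel_measurable \<nu>" using Rnu by auto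
  have le1: "(\<integral>\<^sup>+z. ennreal (N (fst z - snd z) powr p) \<partial>\<gamma>) \<le> (\<integral>\<^sup>+z. ennreal (K0 + K1 * R (fst z) + K1 * R (snd z)) \<partial>\<gamma>)"
  proof (rule nn_integral_mono_AE)
    have "AE z in \<mu> \<Otimes>\<^sub>M \<nu>. 0 < ennreal (f z) \<longrightarrow> ennreal (N (fst z - snd z) powr p) \<le> ennreal (K0 + K1 * R (fst z) + K1 * R (snd z))"
    proof (rule AE_I2, rule impI)
      fix z assume z: "z \<in> space (\<mu> \<Otimes>\<^sub>M \<nu>)" and fz: "0 < ennreal (f z)"
      have "z \<in> Y \<times> Y" using z spP by simp
      hence zz: "fst z \<in> Y" "snd z \<in> Y" by (simp_all add: mem_Times_iff)
      have "f (fst z, snd z) > 0" using fz by (simp only: ennreal_less_zero_iff prod.collapse)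
      from pw[OF zz this] show "ennreal (N (fst z - snd z) powr p) \<le> ennreal (K0 + K1 * R (fst z) + K1 * R (snd z))"
        by (rule ennreal_leI)
    qed
    thus "AE z in \<gamma>. ennreal (N (fst z - snd z) powr p) \<le> ennreal (K0 + K1 * R (fst z) + K1 * R (snd z))"
      unfolding \<gamma>_def by (subst AE_density[OF fmeas'])
  qed
  have iR1: "integrable \<gamma> (\<lambda>z. R (fst z))" using integrable_distr_eq[OF fstm Rmm] d1 Rmu by simp
  have iR2: "integrable \<gamma> (\<lambda>z. R (snd z))" using integrable_distr_eq[OF sndm Rmn] d2 Rnu by simp
  have I1: "(\<integral>z. R (fst z) \<partial>\<gamma>) = T" using integral_distr[OF fstm Rmm] d1 RTmu by simp
  have I2: "(\<integral>z. R (snd z) \<partial>\<gamma>) = T" using integral_distr[OF sndm Rmn] d2 RTnu by simp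
  have iall: "integrable \<gamma> (\<lambda>z. K0 + K1 * R (fst z) + K1 * R (snd z))"
  proof -
    have fm: "finite_measure \<gamma>" using pg prob_space.finite_measure by blast
    have c: "integrable \<gamma> (\<lambda>z. K0)" using fm by (simp add: finite_measure.integrable_const)
    show ?thesis using c iR1 iR2 by (intro Bochner_Integration.integrable_add integrable_mult_right) auto
  qed
  have "(\<integral>\<^sup>+z. ennreal (K0 + K1 * R (fst z) + K1 * R (snd z)) \<partial>\<gamma>) = ennreal (\<integral>z. K0 + K1 * R (fst z) + K1 * R (snd z) \<partial>\<gamma>)"
    using iall K0nn K1nn Rnn sp\<gamma> by (intro nn_integral_eq_integral AE_I2) auto
  also have "(\<integral>z. K0 + K1 * R (fst z) + K1 * R (snd z) \<partial>\<gamma>) = K0 + K1 * T + K1 * T"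
  proof -
    have fm: "finite_measure \<gamma>" using pg prob_space.finite_measure by blast
    have c: "integrable \<gamma> (\<lambda>z. K0)" using fm by (simp add: finite_measure.integrable_const)
    have "(\<integral>z. K0 + K1 * R (fst z) + K1 * R (snd z) \<partial>\<gamma>) = (\<integral>z. K0 + K1 * R (fst z) \<partial>\<gamma>) + (\<integral>z. K1 * R (snd z) \<partial>\<gamma>)"
      using c iR1 iR2 by (intro Bochner_Integration.integral_add) auto
    also have "(\<integral>z. K0 + K1 * R (fst z) \<partial>\<gamma>) = (\<integral>z. K0 \<partial>\<gamma>) + (\<integral>z. K1 * R (fst z) \<partial>\<gamma>)"
      using c iR1 by (intro Bochner_Integration.integral_add) auto
    also have "(\<integral>z. K0 \<partial>\<gamma>) = K0" using prob_space.prob_space[OF pg] by simp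
    also have "(\<integral>z. K1 * R (fst z) \<partial>\<gamma>) = K1 * T" using I1 by simp
    also have "(\<integral>z. K1 * R (snd z) \<partial>\<gamma>) = K1 * T" using I2 by simp
    finally show ?thesis .
  qed
  finally have le2: "(\<integral>\<^sup>+z. ennreal (N (fst z - snd z) powr p) \<partial>\<gamma>) \<le> ennreal (K0 + K1 * T + K1 * T)"
    using le1 by simp
  have "K0 + K1 * T + K1 * T \<le> K0 + (1 - l) powr (1 - p) * 2 powr (p - 1) * (2 * s powr p)"
  proof -
    have "K1 * T + K1 * T \<le> K1 * (2 * s powr p)" using mult_left_mono[OF _ K1nn, of "2 * T" "2 * s powr p"] sT by (simp add: algebra_simps)
    thus ?thesis unfolding K1_def by linarith
  qed
  also have "\<dots> = (2 * e + 2 * s) powr p" unfolding K0_def l_def using final_alg[OF e s p] by simp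
  finally have le3: "K0 + K1 * T + K1 * T \<le> (2 * e + 2 * s) powr p" .
  define I where "I = (INF \<gamma>\<in>couplings \<mu> \<nu>. \<integral>\<^sup>+z. ennreal (N (fst z - snd z) powr p) \<partial>\<gamma>)"
  have "I \<le> ennreal ((2 * e + 2 * s) powr p)"
    unfolding I_def using le2 le3 coup
    by (meson INF_lower2 ennreal_leI order_trans)
  hence "enn2real I \<le> (2 * e + 2 * s) powr p"
    by (metis enn2real_ennreal enn2real_mono ennreal_less_top powr_ge_zero)
  hence "enn2real I powr (1 / p) \<le> ((2 * e + 2 * s) powr p) powr (1 / p)"
    using p by (intro powr_mono2) auto
  also have "\<dots> = 2 * e + 2 * s" using p e s by (simp add: powr_powr powr_one)
  finally show ?thesis unfolding Wasserstein_def I_def .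
qed


lemma finish:
  fixes N :: "'a::euclidean_space \<Rightarrow> real" and \<mu> \<nu> :: "'a measure"
    and g :: "'a \<Rightarrow> 'a \<Rightarrow> real" and R :: "'a \<Rightarrow> real"
  assumes N: "is_norm N" and p: "p \<ge> 1"
  and mu: "borel_prob_on Y \<mu>" and nu: "borel_prob_on Y \<nu>"
  and V: "finite V"
  and gmu: "\<And>v. v \<in> V \<Longrightarrow> integrable \<mu> (g v)"
  and gnu: "\<And>v. v \<in> V \<Longrightarrow> integrable \<nu> (g v)"
  and geq: "\<And>v. v \<in> V \<Longrightarrow> (\<integral>x. g v x \<partial>\<mu>) = (\<integral>x. g v x \<partial>\<nu>)"
  and gnn: "\<And>v x. v \<in> V \<Longrightarrow> x \<in> Y \<Longrightarrow> g v x \<ge> 0"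
  and gsum: "\<And>x. x \<in> Y \<Longrightarrow> (\<Sum>v\<in>V. g v x) = 1"
  and Rmu: "integrable \<mu> R" and Rnu: "integrable \<nu> R"
  and Rnn: "\<And>x. x \<in> Y \<Longrightarrow> R x \<ge> 0"
  and RTmu: "(\<integral>x. R x \<partial>\<mu>) = T" and RTnu: "(\<integral>x. R x \<partial>\<nu>) = T"
  and eta: "\<eta> \<ge> 0"
  and bnd: "\<And>x v. x \<in> Y \<Longrightarrow> v \<in> V \<Longrightarrow> g v x \<noteq> 0 \<Longrightarrow> N (x - v) \<le> \<eta> + R x powr (1 / p)"
  shows "Wasserstein p N \<mu> \<nu> \<le> 2 * \<eta> + 2 * T powr (1 / p)"
proof -
  have smu: "sets \<mu> = sets (restrict_space borel Y)" using mu unfolding borel_prob_on_def by auto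
  have spmu: "space \<mu> = Y" using sets_eq_imp_space_eq[OF smu] by (simp add: space_restrict_space)
  have T0: "T \<ge> 0" unfolding RTmu[symmetric] using Rnn spmu by (intro integral_nonneg_AE AE_I2) auto
  show ?thesis
  proof (rule field_le_epsilon)
    fix \<epsilon> :: real assume ep: "0 < \<epsilon>"
    have sT: "T \<le> (T powr (1 / p) + \<epsilon> / 4) powr p"
    proof -
      have "T = (T powr (1 / p)) powr p" using T0 p by (simp add: powr_powr powr_one)
      also have "\<dots> \<le> (T powr (1 / p) + \<epsilon> / 4) powr p" using ep p by (intro powr_mono2) auto
      finally show ?thesis .
    qed
    have "Wasserstein p N \<mu> \<nu> \<le> 2 * (\<eta> + \<epsilon> / 4) + 2 * (T powr (1 / p) + \<epsilon> / 4)"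
    proof (rule core[OF N p mu nu V gmu gnu geq gnn gsum Rmu Rnu Rnn RTmu RTnu _ _ sT])
      show "0 < \<eta> + \<epsilon> / 4" using eta ep by simp
      show "0 < T powr (1 / p) + \<epsilon> / 4" using ep by (simp add: add_nonneg_pos)
      fix x v assume "x \<in> Y" "v \<in> V" "g v x \<noteq> 0"
      from bnd[OF this] show "N (x - v) \<le> \<eta> + \<epsilon> / 4 + R x powr (1 / p)" using ep by simp
    qed
    thus "Wasserstein p N \<mu> \<nu> \<le> 2 * \<eta> + 2 * T powr (1 / p) + \<epsilon>" by simp
  qed
qed

lemma in_Lp_integrable:
  assumes pm: "prob_space \<mu>" and p: "p \<ge> 1" and h: "in_Lp p \<mu> h" shows "integrable \<mu> h"
proof -
  interpret prob_space \<mu> by fact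
  have m: "h \<in> borel_measurable \<mu>" and i: "integrable \<mu> (\<lambda>x. \<bar>h x\<bar> powr p)"
    using h unfolding in_Lp_def by auto
  have "integrable \<mu> (\<lambda>x. 1 + \<bar>h x\<bar> powr p)" using i by auto
  then show ?thesis
  proof (rule Bochner_Integration.integrable_bound)
    show "h \<in> borel_measurable \<mu>" by fact
    show "AE x in \<mu>. norm (h x) \<le> norm (1 + \<bar>h x\<bar> powr p)"
    proof (rule AE_I2)
      fix x
      have "\<bar>h x\<bar> \<le> 1 + \<bar>h x\<bar> powr p"
      proof (cases "\<bar>h x\<bar> \<le> 1")
        case True then show ?thesis by (smt (verit) powr_ge_zero)
      next
        case False
        hence "\<bar>h x\<bar> powr 1 \<le> \<bar>h x\<bar> powr p" using p by (intro powr_mono) auto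
        thus ?thesis by simp
      qed
      thus "norm (h x) \<le> norm (1 + \<bar>h x\<bar> powr p)" by simp
    qed
  qed
qed

lemma span1_int:
  assumes pm: "prob_space \<mu>" and p: "p \<ge> 1" and G: "\<forall>h\<in>G. in_Lp p \<mu> h" and f: "f \<in> span1 G"
  shows "integrable \<mu> f"
proof -
  interpret prob_space \<mu> by fact
  obtain c0 S c where S: "finite S" "S \<subseteq> G" and fe: "f = (\<lambda>x. c0 + (\<Sum>h\<in>S. c h * h x))"
    using f unfolding span1_def by auto
  have ih: "integrable \<mu> h" if "h \<in> S" for h using in_Lp_integrable[OF pm p] G S that by auto
  show ?thesis unfolding fe using ih by (intro Bochner_Integration.integrable_add integrable_sum integrable_mult_right) auto
qed

lemma span1_integral:
  assumes pm: "prob_space \<mu>" and p: "p \<ge> 1" and G: "\<forall>h\<in>G. in_Lp p \<mu> h"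
    and S: "finite S" "S \<subseteq> G"
  shows "(\<integral>x. c0 + (\<Sum>h\<in>S. c h * h x) \<partial>\<mu>) = c0 + (\<Sum>h\<in>S. c h * (\<integral>x. h x \<partial>\<mu>))"
proof -
  interpret prob_space \<mu> by fact
  have ih: "integrable \<mu> h" if "h \<in> S" for h using in_Lp_integrable[OF pm p] G S that by auto
  have "(\<integral>x. c0 + (\<Sum>h\<in>S. c h * h x) \<partial>\<mu>) = (\<integral>x. c0 \<partial>\<mu>) + (\<integral>x. (\<Sum>h\<in>S. c h * h x) \<partial>\<mu>)"
    using ih by (intro Bochner_Integration.integral_add) auto
  also have "(\<integral>x. c0 \<partial>\<mu>) = c0" using prob_space by simp
  also have "(\<integral>x. (\<Sum>h\<in>S. c h * h x) \<partial>\<mu>) = (\<Sum>h\<in>S. c h * (\<integral>x. h x \<partial>\<mu>))"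
    using ih by simp
  finally show ?thesis .
qed

lemma span1_eq:
  assumes pm: "prob_space \<mu>" and pn: "prob_space \<nu>" and p: "p \<ge> 1"
    and Gm: "\<forall>h\<in>G. in_Lp p \<mu> h" and Gn: "\<forall>h\<in>G. in_Lp p \<nu> h"
    and eq: "G_equiv G \<mu> \<nu>" and f: "f \<in> span1 G"
  shows "(\<integral>x. f x \<partial>\<mu>) = (\<integral>x. f x \<partial>\<nu>)"
proof -
  obtain c0 S c where S: "finite S" "S \<subseteq> G" and fe: "f = (\<lambda>x. c0 + (\<Sum>h\<in>S. c h * h x))"
    using f unfolding span1_def by auto
  have "(\<Sum>h\<in>S. c h * (\<integral>x. h x \<partial>\<mu>)) = (\<Sum>h\<in>S. c h * (\<integral>x. h x \<partial>\<nu>))"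
    using eq S unfolding G_equiv_def by (intro sum.cong) auto
  thus ?thesis unfolding fe span1_integral[OF pm p Gm S] span1_integral[OF pn p Gn S] by simp
qed

lemma ext_dirs_finite:
  fixes C :: "'a::euclidean_space set"
  assumes "polyhedron C" shows "finite (ext_dirs C)"
proof -
  define \<phi> where "\<phi> F = {z. norm z = 1 \<and> (\<exists>x. F = {x + l *\<^sub>R z | l. l \<ge> 0})}" for F :: "'a set"
  have sub: "ext_dirs C \<subseteq> \<Union> (\<phi> ` {F. F face_of C})" unfolding ext_dirs_def \<phi>_def by blast
  have "finite (\<phi> F)" for F
  proof -
    have "u = u'" if u: "u \<in> \<phi> F" and u': "u' \<in> \<phi> F" for u u'
    proof -
      obtain x where x: "F = {x + l *\<^sub>R u | l. l \<ge> 0}" and nu: "norm u = 1" using u unfolding \<phi>_def by auto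
      obtain x' where x': "F = {x' + l *\<^sub>R u' | l. l \<ge> 0}" and nu': "norm u' = 1" using u' unfolding \<phi>_def by auto
      have "x + 0 *\<^sub>R u \<in> F" unfolding x by blast
      hence "x \<in> F" by simp
      then obtain l0 where l0: "l0 \<ge> 0" "x = x' + l0 *\<^sub>R u'" unfolding x' by blast
      have "x' + (l0 + 1) *\<^sub>R u' \<in> F" unfolding x' using l0 by (intro CollectI exI[of _ "l0 + 1"]) auto
      then obtain l where l: "l \<ge> 0" "x' + (l0 + 1) *\<^sub>R u' = x + l *\<^sub>R u" unfolding x by blast
      hence ul: "u' = l *\<^sub>R u" using l0 by (simp add: algebra_simps)
      hence "norm u' = l * norm u" using l by simp
      hence "l = 1" using nu nu' by simp
      thus ?thesis using ul by simp
    qed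
    hence "\<phi> F = {} \<or> (\<exists>a. \<phi> F = {a})" by blast
    thus ?thesis by auto
  qed
  thus ?thesis using finite_polyhedron_faces[OF assms] by (intro finite_subset[OF sub]) auto
qed

lemma norm_convex_on:
  fixes N :: "'a::real_vector \<Rightarrow> real"
  assumes N: "is_norm N" and A: "convex A" shows "convex_on A (\<lambda>y. N (y - v))"
proof (rule convex_onI[OF _ A])
  fix t :: real and x y assume t: "0 < t" "t < 1"
  have "(1 - t) *\<^sub>R x + t *\<^sub>R y - v = (1 - t) *\<^sub>R (x - v) + t *\<^sub>R (y - v)" by (simp add: algebra_simps)
  hence "N ((1 - t) *\<^sub>R x + t *\<^sub>R y - v) \<le> N ((1 - t) *\<^sub>R (x - v)) + N (t *\<^sub>R (y - v))"
    using N unfolding is_norm_def by metis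
  also have "N ((1 - t) *\<^sub>R (x - v)) = (1 - t) * N (x - v)" using N t unfolding is_norm_def by simp
  also have "N (t *\<^sub>R (y - v)) = t * N (y - v)" using N t unfolding is_norm_def by simp
  finally show "N ((1 - t) *\<^sub>R x + t *\<^sub>R y - v) \<le> (1 - t) * N (x - v) + t * N (y - v)" .
qed


theorem theorem3p14:
  fixes N :: "real ^ 'm \<Rightarrow> real" and p :: real
    and Y :: "(real ^ 'm) set" and CC :: "(real ^ 'm) set set"
  assumes "is_norm N" and "p \<ge> 1" and "closed Y" and "polyhedral_cover CC Y"
  shows "((\<forall>C\<in>CC. bounded C) \<longrightarrow>
           (\<forall>G. interp_fun_set CC G \<longrightarrow>
              (\<forall>\<mu>\<in>PpG p N Y G. \<forall>\<nu>\<in>PpG p N Y G. G_equiv G \<mu> \<nu> \<longrightarrow>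
                 Wasserstein p N \<mu> \<nu> \<le> 2 * mesh N CC))) \<and>
         (\<not> (\<forall>C\<in>CC. bounded C) \<longrightarrow>
           (\<forall>G gb. p_interp_fun_set p N CC G \<and> radial_fun_set p N CC gb \<and>
                   (\<forall>u\<in>cover_dirs CC. gb u \<in> span1 G) \<longrightarrow>
              (\<forall>\<mu>\<in>PpG p N Y G. \<forall>\<nu>\<in>PpG p N Y G. G_equiv G \<mu> \<nu> \<longrightarrow>
                 Wasserstein p N \<mu> \<nu> \<le> 2 * mesh N CC
                   + 2 * (\<Sum>u\<in>cover_dirs CC. \<integral>x. gb u x \<partial>\<mu>) powr (1 / p))))"
proof -
  note N = assms(1) and p = assms(2)
  have finCC: "finite CC" and polyC: "\<And>C. C \<in> CC \<Longrightarrow> polyhedron C"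
    and vneC: "\<And>C. C \<in> CC \<Longrightarrow> vertices C \<noteq> {}" and YCC: "Y \<subseteq> \<Union>CC"
    using assms(4) unfolding polyhedral_cover_def by auto
  have vfin: "finite (vertices C)" if "C \<in> CC" for C
    unfolding vertices_def using finite_polyhedron_extreme_points polyC that by blast
  define V where "V = cover_vertices CC"
  have Vfin: "finite V" unfolding V_def cover_vertices_def using finCC vfin by auto
  have vV: "vertices C \<subseteq> V" if "C \<in> CC" for C unfolding V_def cover_vertices_def using that by auto
  define \<eta> where "\<eta> = mesh N CC"
  have meshb: "N (v - v') \<le> \<eta>" if C: "C \<in> CC" and v: "v \<in> vertices C" and v': "v' \<in> vertices C" for C v v'
  proof -
    have fin: "finite {N (v - v') | v v'. v \<in> vertices C \<and> v' \<in> vertices C}"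
      using vfin[OF C] by (intro finite_image_set2) auto
    have "N (v - v') \<le> Max {N (v - v') | v v'. v \<in> vertices C \<and> v' \<in> vertices C}"
      using v v' by (intro Max_ge[OF fin]) auto
    also have "\<dots> \<le> mesh N CC" unfolding mesh_def using finCC C by (intro Max_ge) auto
    finally show ?thesis unfolding \<eta>_def .
  qed
  have hullb: "N (y - v) \<le> \<eta>" if C: "C \<in> CC" and v: "v \<in> vertices C" and y: "y \<in> convex hull (vertices C)" for C v y
    using convex_on_convex_hull_bound[OF norm_convex_on[OF N convex_convex_hull, of "vertices C" v], of \<eta>]
      meshb[OF C _ v] y by auto
  have Cface: "C \<in> cover_faces CC" if C: "C \<in> CC" for C
  proof -
    have "C \<noteq> {}" using vneC[OF C] unfolding vertices_def extreme_point_of_def by auto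
    thus ?thesis unfolding cover_faces_def using C face_of_refl[OF polyhedron_imp_convex[OF polyC[OF C]]] by auto
  qed
  have gvert: "v \<in> vertices C"
    if g: "vertex_interp CC g" and C: "C \<in> CC" and x: "x \<in> C" and v: "v \<in> V" and nz: "g v x \<noteq> 0" for g C x v
    using g Cface[OF C] x v nz unfolding vertex_interp_def V_def by blast
  have gsum: "(\<Sum>v\<in>V. g v x) = 1" if g: "vertex_interp CC g" and x: "x \<in> Y" for g x
  proof -
    obtain C where C: "C \<in> CC" "x \<in> C" using x YCC by auto
    have "(\<Sum>v\<in>vertices C. g v x) = 1" using g Cface[OF C(1)] C(2) unfolding vertex_interp_def by blast
    moreover have "(\<Sum>v\<in>vertices C. g v x) = (\<Sum>v\<in>V. g v x)"
    proof (rule sum.mono_neutral_left[OF Vfin vV[OF C(1)]])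
      show "\<forall>i\<in>V - vertices C. g i x = 0"
        using g Cface[OF C(1)] C(2) unfolding vertex_interp_def V_def by blast
    qed
    ultimately show ?thesis by simp
  qed
  have bbnd: "N (x - v) \<le> \<eta>" if C: "C \<in> CC" "bounded C" and x: "x \<in> C" and v: "v \<in> vertices C" for C x v
  proof -
    have "compact C" using C polyhedron_imp_closed[OF polyC[OF C(1)]] by (simp add: compact_eq_bounded_closed)
    hence "C = convex hull (vertices C)"
      unfolding vertices_def using Krein_Milman_Minkowski polyhedron_imp_convex[OF polyC[OF C(1)]] by blast
    thus ?thesis using hullb[OF C(1) v] x by auto
  qed
  have ubnd: "N (x - v) - \<eta> \<le> (INF y\<in>convex hull (vertices C). N (x - y))"
    if C: "C \<in> CC" and x: "x \<in> C" and v: "v \<in> vertices C" for C x v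
  proof (rule cINF_greatest)
    show "convex hull vertices C \<noteq> {}" using vneC[OF C] by simp
    fix y assume y: "y \<in> convex hull vertices C"
    have "N (x - v) \<le> N (x - y) + N (y - v)" by (rule norm_tri[OF N])
    thus "N (x - v) - \<eta> \<le> N (x - y)" using hullb[OF C v y] by linarith
  qed
  have INFnn: "(INF y\<in>convex hull (vertices C). N (x - y)) \<ge> 0" if C: "C \<in> CC" for C x
    using vneC[OF C] norm_nn[OF N] by (intro cINF_greatest) auto
  have common: "borel_prob_on Y \<mu> \<and> prob_space \<mu> \<and> (\<forall>h\<in>G. in_Lp p \<mu> h)" if "\<mu> \<in> PpG p N Y G" for \<mu> G
    using that unfolding PpG_def Pp_def borel_prob_on_def by auto
  have eta0: "\<eta> \<ge> 0" if "\<mu> \<in> PpG p N Y G" for \<mu> G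
  proof -
    have bp: "borel_prob_on Y \<mu>" and pm: "prob_space \<mu>" using common[OF that] by auto
    have sm: "sets \<mu> = sets (restrict_space borel Y)" using bp unfolding borel_prob_on_def by auto
    have "space \<mu> = Y" using sets_eq_imp_space_eq[OF sm] by (simp add: space_restrict_space)
    hence "Y \<noteq> {}" using prob_space.not_empty[OF pm] by simp
    then obtain x where "x \<in> Y" by auto
    then obtain C where C: "C \<in> CC" using YCC by auto
    then obtain v where v: "v \<in> vertices C" using vneC by blast
    have "N (v - v) \<le> \<eta>" by (rule meshb[OF C v v])
    moreover have "N (v - v) = 0" using N unfolding is_norm_def by simp
    ultimately show ?thesis by simp
  qed
  show ?thesis
  proof (intro conjI impI allI ballI)
    fix G \<mu> \<nu> assume allb: "\<forall>C\<in>CC. bounded C" and ig: "interp_fun_set CC G"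
      and mu: "\<mu> \<in> PpG p N Y G" and nu: "\<nu> \<in> PpG p N Y G" and eq: "G_equiv G \<mu> \<nu>"
    obtain g where g: "vertex_interp CC g" and gs: "\<forall>v\<in>V. g v \<in> span1 G"
      using ig unfolding interp_fun_set_def V_def by auto
    have bpm: "borel_prob_on Y \<mu>" and pm: "prob_space \<mu>" and Gm: "\<forall>h\<in>G. in_Lp p \<mu> h" using common[OF mu] by auto
    have bpn: "borel_prob_on Y \<nu>" and pn: "prob_space \<nu>" and Gn: "\<forall>h\<in>G. in_Lp p \<nu> h" using common[OF nu] by auto
    have gmu: "integrable \<mu> (g v)" if "v \<in> V" for v using span1_int[OF pm p Gm] gs that by auto
    have gnu: "integrable \<nu> (g v)" if "v \<in> V" for v using span1_int[OF pn p Gn] gs that by auto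
    have geq: "(\<integral>x. g v x \<partial>\<mu>) = (\<integral>x. g v x \<partial>\<nu>)" if "v \<in> V" for v using span1_eq[OF pm pn p Gm Gn eq] gs that by auto
    have gnn0: "\<forall>v\<in>cover_vertices CC. \<forall>x\<in>\<Union>CC. g v x \<ge> 0" using g unfolding vertex_interp_def by (rule conjunct1)
    have gnn: "g v x \<ge> 0" if "v \<in> V" "x \<in> Y" for v x using gnn0 that(1) subsetD[OF YCC that(2)] unfolding V_def by blast
    have "Wasserstein p N \<mu> \<nu> \<le> 2 * \<eta> + 2 * 0 powr (1 / p)"
    proof (rule finish[OF N p bpm bpn Vfin gmu gnu geq gnn gsum[OF g], where R="\<lambda>_. 0"])
      show "\<eta> \<ge> 0" by (rule eta0[OF mu])
      fix x v assume x: "x \<in> Y" and v: "v \<in> V" and nz: "g v x \<noteq> 0"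
      obtain C where C: "C \<in> CC" "x \<in> C" using x YCC by auto
      have "v \<in> vertices C" by (rule gvert[OF g C v nz])
      thus "N (x - v) \<le> \<eta> + 0 powr (1 / p)" using bbnd[OF C(1) _ C(2)] allb C by simp
    qed auto
    thus "Wasserstein p N \<mu> \<nu> \<le> 2 * mesh N CC" by (simp add: \<eta>_def)
  next
    fix G gb \<mu> \<nu> assume nb: "\<not> (\<forall>C\<in>CC. bounded C)"
      and H: "p_interp_fun_set p N CC G \<and> radial_fun_set p N CC gb \<and> (\<forall>u\<in>cover_dirs CC. gb u \<in> span1 G)"
      and mu: "\<mu> \<in> PpG p N Y G" and nu: "\<nu> \<in> PpG p N Y G" and eq: "G_equiv G \<mu> \<nu>"
    obtain g where g: "vertex_interp CC g" and gs: "\<forall>v\<in>V. g v \<in> span1 G"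
      using H unfolding p_interp_fun_set_def interp_fun_set_def V_def by auto
    have rad: "radial_fun_set p N CC gb" and gbs: "\<forall>u\<in>cover_dirs CC. gb u \<in> span1 G" using H by auto
    have bpm: "borel_prob_on Y \<mu>" and pm: "prob_space \<mu>" and Gm: "\<forall>h\<in>G. in_Lp p \<mu> h" using common[OF mu] by auto
    have bpn: "borel_prob_on Y \<nu>" and pn: "prob_space \<nu>" and Gn: "\<forall>h\<in>G. in_Lp p \<nu> h" using common[OF nu] by auto
    have gmu: "integrable \<mu> (g v)" if "v \<in> V" for v using span1_int[OF pm p Gm] gs that by auto
    have gnu: "integrable \<nu> (g v)" if "v \<in> V" for v using span1_int[OF pn p Gn] gs that by auto
    have geq: "(\<integral>x. g v x \<partial>\<mu>) = (\<integral>x. g v x \<partial>\<nu>)" if "v \<in> V" for v using span1_eq[OF pm pn p Gm Gn eq] gs that by auto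
    have gnn0: "\<forall>v\<in>cover_vertices CC. \<forall>x\<in>\<Union>CC. g v x \<ge> 0" using g unfolding vertex_interp_def by (rule conjunct1)
    have gnn: "g v x \<ge> 0" if "v \<in> V" "x \<in> Y" for v x using gnn0 that(1) subsetD[OF YCC that(2)] unfolding V_def by blast
    have Dfin: "finite (cover_dirs CC)" unfolding cover_dirs_def using finCC ext_dirs_finite polyC by auto
    define R where "R x = (\<Sum>u\<in>cover_dirs CC. gb u x)" for x
    define T where "T = (\<Sum>u\<in>cover_dirs CC. \<integral>x. gb u x \<partial>\<mu>)"
    have bmu: "integrable \<mu> (gb u)" if "u \<in> cover_dirs CC" for u using span1_int[OF pm p Gm] gbs that by auto
    have bnu: "integrable \<nu> (gb u)" if "u \<in> cover_dirs CC" for u using span1_int[OF pn p Gn] gbs that by auto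
    have Rmu: "integrable \<mu> R" unfolding R_def using bmu by auto
    have Rnu: "integrable \<nu> R" unfolding R_def using bnu by auto
    have RTmu: "(\<integral>x. R x \<partial>\<mu>) = T" unfolding R_def T_def using bmu by simp
    have "(\<integral>x. R x \<partial>\<nu>) = (\<Sum>u\<in>cover_dirs CC. \<integral>x. gb u x \<partial>\<nu>)" unfolding R_def using bnu by simp
    also have "\<dots> = T" unfolding T_def using span1_eq[OF pm pn p Gm Gn eq] gbs by (intro sum.cong) auto
    finally have RTnu: "(\<integral>x. R x \<partial>\<nu>) = T" .
    have gbnn: "gb u x \<ge> 0" if "u \<in> cover_dirs CC" "x \<in> Y" for u x
      using rad that YCC unfolding radial_fun_set_def by blast
    have Rnn: "R x \<ge> 0" if "x \<in> Y" for x unfolding R_def using gbnn that by (intro sum_nonneg) auto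
    have "Wasserstein p N \<mu> \<nu> \<le> 2 * \<eta> + 2 * T powr (1 / p)"
    proof (rule finish[OF N p bpm bpn Vfin gmu gnu geq gnn gsum[OF g] Rmu Rnu Rnn RTmu RTnu eta0[OF mu]])
      fix x v assume x: "x \<in> Y" and v: "v \<in> V" and nz: "g v x \<noteq> 0"
      obtain C where C: "C \<in> CC" "x \<in> C" using x YCC by auto
      have vC: "v \<in> vertices C" by (rule gvert[OF g C v nz])
      show "N (x - v) \<le> \<eta> + R x powr (1 / p)"
      proof (cases "bounded C")
        case True
        hence "N (x - v) \<le> \<eta>" using bbnd[OF C(1) _ C(2) vC] by simp
        thus ?thesis by (smt (verit) powr_ge_zero)
      next
        case False
        define I where "I = (INF y\<in>convex hull (vertices C). N (x - y))"
        have I0: "I \<ge> 0" unfolding I_def by (rule INFnn[OF C(1)])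
        have "I powr p \<le> (\<Sum>u\<in>ext_dirs C. gb u x)"
          using rad Cface[OF C(1)] False C(2) unfolding radial_fun_set_def I_def by blast
        also have "\<dots> \<le> R x" unfolding R_def
        proof (rule sum_mono2[OF Dfin])
          show "ext_dirs C \<subseteq> cover_dirs CC" unfolding cover_dirs_def using C(1) by auto
          fix u assume "u \<in> cover_dirs CC - ext_dirs C"
          thus "0 \<le> gb u x" using gbnn x by auto
        qed
        finally have "I powr p \<le> R x" .
        hence "(I powr p) powr (1 / p) \<le> R x powr (1 / p)" using p by (intro powr_mono2) auto
        moreover have "(I powr p) powr (1 / p) = I" using I0 p by (simp add: powr_powr powr_one)
        ultimately have "I \<le> R x powr (1 / p)" by simp
        moreover have "N (x - v) - \<eta> \<le> I" unfolding I_def by (rule ubnd[OF C(1) C(2) vC])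
        ultimately show ?thesis by linarith
      qed
    qed
    thus "Wasserstein p N \<mu> \<nu> \<le> 2 * mesh N CC + 2 * (\<Sum>u\<in>cover_dirs CC. \<integral>x. gb u x \<partial>\<mu>) powr (1 / p)"
      by (simp add: \<eta>_def T_def)
  qed
qed

end
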